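(* Let $\varphi=(1+\sqrt5)/2$ and let $s_Z$ be the Zeckendorf sum of digits function. Let $I_Z=(I_Z(n))_{n\ge1}$ be the increasing enumeration of the points of increase of $s_Z$, let $C_Z=(C_Z(n))_{n\ge1}$ be the increasing enumeration of the points of constancy of $s_Z$, and let $D_Z=(D_Z(n))_{n\ge1}$ be defined by $D_Z(1)=-1$ and, for $n\ge1$, $D_Z(n+1)$ is the $n$-th smallest point of decrease of $s_Z$. Then: (i) $I_Z(n)=\lfloor n\varphi\rfloor+n-2$ for all $n\ge1$; (ii) the set of points of constancy of $s_Z$ equals $\{2\lfloor n\varphi\rfloor+n-2:\ n\ge1\}\cup\{3\lfloor n\varphi\rfloor+2n-3:\ n\ge1\}$, i.e. $C_Z$ is the increasing enumeration of this union; (iii) $D_Z(n)=2\lfloor n\varphi\rfloor+n-4$ for all $n\ge1$.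
   Context: Fibonacci numbers: $F_0=0$, $F_1=1$, $F_n=F_{n-1}+F_{n-2}$ for $n\ge2$. Every integer $N\ge0$ can be written uniquely (ignoring leading zeros) as $N=\sum_{i\ge0}d_i(N)F_{i+2}$ with digits $d_i(N)\in\{0,1\}$ such that no two consecutive digits $d_i,d_{i+1}$ are both $1$ (Zeckendorf expansion). The Zeckendorf sum of digits function is $s_Z(N)=\sum_{i\ge0}d_i(N)$ for $N\ge0$. With $\Delta s_Z(N)=s_Z(N+1)-s_Z(N)$, an integer $N\ge0$ is a point of increase, of constancy, or of decrease of $s_Z$ according as $\Delta s_Z(N)>0$, $=0$, or $<0$. *)

theory Defs
  imports Complex_Main "HOL-Number_Theory.Fib" "HOL-Library.Infinite_Set"
begin

definition phi :: real where "phi = (1 + sqrt 5) / 2"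

definition zeck_rep :: "nat \<Rightarrow> nat set \<Rightarrow> bool" where
  "zeck_rep N S \<longleftrightarrow> finite S \<and> (\<forall>i\<in>S. Suc i \<notin> S) \<and> N = (\<Sum>i\<in>S. fib (i + 2))"

definition sZ :: "nat \<Rightarrow> nat" where
  "sZ N = card (THE S. zeck_rep N S)"

definition incr_pts :: "nat set" where
  "incr_pts = {N. int (sZ (Suc N)) - int (sZ N) > 0}"

definition const_pts :: "nat set" where
  "const_pts = {N. int (sZ (Suc N)) - int (sZ N) = 0}"

definition decr_pts :: "nat set" where
  "decr_pts = {N. int (sZ (Suc N)) - int (sZ N) < 0}"

definition I_Z :: "nat \<Rightarrow> nat" where
  "I_Z n = enumerate incr_pts (n - 1)"

definition C_Z :: "nat \<Rightarrow> nat" where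
  "C_Z n = enumerate const_pts (n - 1)"

definition D_Z :: "nat \<Rightarrow> int" where
  "D_Z n = (if n = 1 then -1 else int (enumerate decr_pts (n - 2)))"

end

theory Submission
  imports Defs
begin


definition ncs :: "nat set \<Rightarrow> bool" where
  "ncs S \<longleftrightarrow> finite S \<and> (\<forall>i\<in>S. Suc i \<notin> S)"

definition val :: "nat set \<Rightarrow> nat" where
  "val S = (\<Sum>i\<in>S. fib (i + 2))"

declare fib.simps(3)[simp del]

lemma fib3: "fib (j + 3) = fib (j + 2) + fib (j + 1)"
  using fib.simps(3)[of "Suc j"] by (simp add: numeral_eq_Suc)

lemma fibSSS: "fib (Suc (Suc (Suc j))) = fib (Suc j) + fib (Suc (Suc j))"
  by (simp add: fib.simps(3))

lemma fib_add3: "fib (k + 3) = fib (Suc (Suc (Suc k)))"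
  by (simp add: numeral_eq_Suc)

lemma fibpos: "fib (i + 2) > 0"
  by (rule fib_neq_0_nat) simp

lemma fibpos'[simp]: "fib (Suc (Suc i)) > 0"
  by (rule fib_neq_0_nat) simp

lemma fib_SS_neq0[simp]: "fib (Suc (Suc i)) \<noteq> 0"
  using fibpos'[of i] by linarith

lemma fib_SS0[simp]: "fib (Suc (Suc 0)) = 1"
  by (simp add: fib.simps(3))

lemma val_zero: "ncs S \<Longrightarrow> val S = 0 \<Longrightarrow> S = {}"
  unfolding val_def ncs_def using fibpos by (auto simp: sum_eq_0_iff)

lemma zeck_rep_iff: "zeck_rep N S \<longleftrightarrow> ncs S \<and> N = val S"
  unfolding zeck_rep_def ncs_def val_def by auto

lemma val_bound:
  "ncs S \<Longrightarrow> (\<forall>i\<in>S. i < m) \<Longrightarrow> val S < fib (m + 2)"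
proof (induction m arbitrary: S rule: less_induct)
  case (less m)
  show ?case
  proof (cases "m < 2")
    case True
    show ?thesis
    proof (cases "m = 0")
      case True
      then have "S = {}" using less.prems by auto
      then show ?thesis by (simp add: val_def)
    next
      case False
      then have m1: "m = 1" using True by auto
      then have "S \<subseteq> {0}" using less.prems by auto
      then have "val S \<le> 1" by (cases "S = {}") (auto simp: val_def subset_singleton_iff)
      moreover have "fib (Suc (Suc (Suc 0))) = 2" by (simp add: fib.simps(3))
      ultimately show ?thesis using m1 by simp
    qed
  next
    case False
    obtain k where k: "m = k + 2" using False by (intro that[of "m - 2"]) simp
    show ?thesis
    proof (cases "k + 1 \<in> S")
      case True
      have n: "ncs (S - {k+1})" using less.prems by (auto simp: ncs_def)
      have b: "\<forall>i\<in>S - {k+1}. i < k"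
      proof
        fix i assume i: "i \<in> S - {k+1}"
        then have "i < k + 2" using less.prems k by auto
        moreover have "i \<noteq> k + 1" using i by auto
        moreover have "i \<noteq> k" using i True less.prems by (auto simp: ncs_def)
        ultimately show "i < k" by auto
      qed
      have kl: "k < m" using k by simp
      have "val (S - {k+1}) < fib (k + 2)" by (rule less.IH[OF kl n b])
      moreover have "val S = fib (k + 1 + 2) + val (S - {k+1})"
        unfolding val_def using True less.prems by (simp add: ncs_def sum.remove)
      moreover have "fib (k + 1 + 2) + fib (k + 2) = fib (m + 2)"
        using k by (simp add: fib.simps(3))
      ultimately show ?thesis by linarith
    next
      case False
      have b: "\<forall>i\<in>S. i < k + 1"
      proof
        fix i assume i: "i \<in> S"
        then have "i < k + 2" "i \<noteq> k + 1" using less.prems k False by auto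
        then show "i < k + 1" by simp
      qed
      have kl: "k + 1 < m" using k by simp
      have "val S < fib (k + 1 + 2)" by (rule less.IH[OF kl less.prems(1) b])
      also have "\<dots> \<le> fib (m + 2)" using k by (intro fib_mono) auto
      finally show ?thesis .
    qed
  qed
qed

lemma val_max:
  assumes "ncs S" "a \<in> S" "\<forall>i\<in>S. i \<le> a"
  shows "fib (a+2) \<le> val S" "val S < fib (a + 3)"
proof -
  have fin: "finite S" using assms by (simp add: ncs_def)
  have eq: "val S = fib (a+2) + val (S - {a})"
    using assms fin by (simp add: val_def sum.remove)
  then show "fib (a+2) \<le> val S" by simp
  have "ncs (S - {a})" using assms by (auto simp: ncs_def)
  moreover have "\<forall>i\<in>S - {a}. i < a - 1"
  proof
    fix i assume i: "i \<in> S - {a}"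
    then have "i < a" using assms by force
    moreover have "Suc i \<noteq> a" using i assms by (auto simp: ncs_def)
    ultimately show "i < a - 1" by auto
  qed
  ultimately have vb: "val (S - {a}) < fib (a - 1 + 2)" by (rule val_bound)
  have "val (S - {a}) < fib (a + 1)"
  proof (cases "a = 0")
    case True
    then have e: "S - {a} = {}" using assms by auto
    have "val (S - {a}) = 0" unfolding e by (simp add: val_def)
    then show ?thesis using True by simp
  next
    case False
    then have "a - 1 + 2 = a + 1" by simp
    then show ?thesis using vb by simp
  qed
  then have "val S < fib (a+2) + fib (a+1)" using eq by simp
  also have "\<dots> = fib (a+3)" by (rule fib3[symmetric])
  finally show "val S < fib (a + 3)" .
qed

lemma zeck_unique:
  "ncs S \<Longrightarrow> ncs T \<Longrightarrow> val S = val T \<Longrightarrow> S = T"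
proof (induction "card S" arbitrary: S T rule: less_induct)
  case less
  show ?case
  proof (cases "S = {}")
    case True
    then have "val T = 0" using less.prems by (simp add: val_def)
    then have "T = {}" using less.prems val_zero by blast
    then show ?thesis using True by simp
  next
    case False
    have "T \<noteq> {}"
    proof
      assume "T = {}"
      then have "val S = 0" using less.prems by (simp add: val_def)
      then show False using less.prems False val_zero by blast
    qed
    have finS: "finite S" and finT: "finite T" using less.prems by (auto simp: ncs_def)
    define a where "a = Max S"
    define b where "b = Max T"
    have a: "a \<in> S" "\<forall>i\<in>S. i \<le> a" using finS False by (auto simp: a_def)
    have b: "b \<in> T" "\<forall>i\<in>T. i \<le> b" using finT \<open>T \<noteq> {}\<close> by (auto simp: b_def)
    note A = val_max[OF less.prems(1) a] and B = val_max[OF less.prems(2) b]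
    have "a = b"
    proof (rule ccontr)
      assume "a \<noteq> b"
      then have "a + 3 \<le> b + 2 \<or> b + 3 \<le> a + 2" by auto
      then show False
      proof
        assume "a + 3 \<le> b + 2"
        then have "fib (a+3) \<le> fib (b+2)" by (rule fib_mono)
        then show False using A B less.prems by linarith
      next
        assume "b + 3 \<le> a + 2"
        then have "fib (b+3) \<le> fib (a+2)" by (rule fib_mono)
        then show False using A B less.prems by linarith
      qed
    qed
    have "val S = fib (a+2) + val (S - {a})"
      using a finS by (simp add: val_def sum.remove)
    moreover have "val T = fib (a+2) + val (T - {a})"
      using b finT \<open>a = b\<close> by (simp add: val_def sum.remove)
    ultimately have v: "val (S - {a}) = val (T - {a})" using less.prems by simp
    have n1: "ncs (S - {a})" and n2: "ncs (T - {a})" using less.prems by (auto simp: ncs_def)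
    have c: "card (S - {a}) < card S" using a finS by (meson card_Diff1_less)
    have "S - {a} = T - {a}" by (rule less.hyps[OF c n1 n2 v])
    then show ?thesis using a b \<open>a = b\<close> by blast
  qed
qed

lemma carry:
  "ncs S \<Longrightarrow> j \<in> S \<Longrightarrow> \<exists>S'. ncs S' \<and> val S' = val S + fib (j + 1) \<and>
     (j + 2 \<notin> S \<longrightarrow> card S' = card S) \<and> (j + 2 \<in> S \<longrightarrow> card S' < card S)"
proof (induction "card S" arbitrary: S j rule: less_induct)
  case less
  have fin: "finite S" using less.prems by (simp add: ncs_def)
  have j1: "j + 1 \<notin> S" using less.prems by (auto simp: ncs_def)
  show ?case
  proof (cases "j + 2 \<in> S")
    case False
    define S' where "S' = insert (j+1) (S - {j})"
    have "ncs S'" using less.prems False unfolding S'_def ncs_def by auto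
    moreover have "val S' = val S + fib (j + 1)"
    proof -
      have "val S' = fib (j+3) + val (S - {j})"
        using j1 fin by (simp add: S'_def val_def numeral_eq_Suc)
      moreover have "val S = fib (j+2) + val (S - {j})"
        using less.prems fin by (simp add: val_def sum.remove)
      moreover have "fib (j+3) = fib (j+2) + fib (j+1)" by (rule fib3)
      ultimately show ?thesis by simp
    qed
    moreover have "card S' = card S" using j1 fin less.prems
      by (simp add: S'_def) (metis card_0_eq empty_iff Suc_pred neq0_conv)
    ultimately show ?thesis using False by blast
  next
    case True
    have n: "ncs (S - {j})" using less.prems by (auto simp: ncs_def)
    have c: "card (S - {j}) < card S" using less.prems fin by (meson card_Diff1_less)
    have jj: "j + 2 \<in> S - {j}" using True by simp
    obtain S' where S': "ncs S'" "val S' = val (S - {j}) + fib (j + 2 + 1)"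
      "card S' \<le> card (S - {j})"
      using less.hyps[OF c n jj] by (metis less_imp_le order_refl)
    have "val S = fib (j+2) + val (S - {j})"
      using less.prems fin by (simp add: val_def sum.remove)
    moreover have "fib (j+3) = fib (j+2) + fib (j+1)" by (rule fib3)
    moreover have e: "j + 2 + 1 = j + 3" by simp
    ultimately have "val S' = val S + fib (j+1)" using S'(2)[unfolded e] by linarith
    moreover have "card S' < card S" using S'(3) c by linarith
    ultimately show ?thesis using S'(1) True by blast
  qed
qed

lemma zeck_exists: "\<exists>S. ncs S \<and> val S = N"
proof (induction N)
  case 0
  show ?case by (intro exI[of _ "{}"]) (auto simp: ncs_def val_def)
next
  case (Suc N)
  then obtain S where S: "ncs S" "val S = N" by blast
  show ?case
  proof (cases "0 \<in> S")
    case True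
    from carry[OF S(1) True] obtain S' where "ncs S'" "val S' = val S + fib (0 + 1)" by blast
    then show ?thesis using S by (intro exI[of _ S']) simp
  next
    case F0: False
    show ?thesis
    proof (cases "1 \<in> S")
      case True
      from carry[OF S(1) True] obtain S' where "ncs S'" "val S' = val S + fib (1 + 1)" by blast
      then show ?thesis using S by (intro exI[of _ S']) (simp add: numeral_2_eq_2)
    next
      case False
      have "ncs (insert 0 S)" using S F0 False by (auto simp: ncs_def)
      moreover have "val (insert 0 S) = fib (0+2) + val S"
        unfolding val_def by (rule sum.insert) (use S F0 in \<open>auto simp: ncs_def\<close>)
      moreover have "fib (0+2) = 1" by simp
      ultimately show ?thesis using S(2) by (intro exI[of _ "insert 0 S"]) simp
    qed
  qed
qed

lemma sZ_eq: "ncs S \<Longrightarrow> sZ (val S) = card S"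
proof -
  assume S: "ncs S"
  have "(THE T. zeck_rep (val S) T) = S"
  proof (rule the_equality)
    show "zeck_rep (val S) S" using S by (simp add: zeck_rep_iff)
  next
    fix T assume "zeck_rep (val S) T"
    then have "ncs T" "val T = val S" by (auto simp: zeck_rep_iff)
    then show "T = S" using S zeck_unique[of T S] by blast
  qed
  then show ?thesis by (simp add: sZ_def)
qed



definition r :: real where "r = phi - 1"

lemma r_sq: "r * r = 1 - r"
proof -
  have h: "2 * r + 1 = sqrt 5" unfolding r_def phi_def by (simp add: field_simps)
  have "(2 * r + 1) * (2 * r + 1) = 5" unfolding h by simp
  then have "4 * (r * r) + 4 * r = 4" by (simp add: algebra_simps)
  then show ?thesis by linarith
qed

lemma r_bounds0: "0.61 < r" "r < 0.62"
proof -
  have "2.22 < sqrt 5" by (rule real_less_rsqrt) (simp add: power2_eq_square)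
  moreover have "sqrt 5 < 2.24" by (rule real_less_lsqrt) (simp_all add: power2_eq_square)
  ultimately show "0.61 < r" "r < 0.62" unfolding r_def phi_def by auto
qed

lemma r_bounds: "3/5 < r" "r < 5/8" using r_bounds0 by simp_all

lemma r_pos: "0 < r" and r_lt1: "r < 1" using r_bounds by auto

lemma r_rec: "r^(k+2) = r^k - r^(k+1)"
proof -
  have "r^(k+2) = r^k * (r * r)" by (simp add: power_add power2_eq_square)
  also have "\<dots> = r^k * (1 - r)" by (simp add: r_sq)
  also have "\<dots> = r^k - r^(k+1)" by (simp add: algebra_simps)
  finally show ?thesis .
qed

lemma r_pows: "r^2 = 1 - r" "r^3 = 2*r - 1" "r^4 = 2 - 3*r" "r^5 = 5*r - 3"
  "r^6 = 5 - 8*r" "r^7 = 13*r - 8"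
proof -
  have a: "r^2 = 1 - r" using r_sq by (simp add: power2_eq_square)
  have b: "r^3 = r - r^2" using r_rec[of 1] by (simp add: power2_eq_square power3_eq_cube)
  have c: "r^4 = r^2 - r^3" using r_rec[of 2] by simp
  have d: "r^5 = r^3 - r^4" using r_rec[of 3] by simp
  have e: "r^6 = r^4 - r^5" using r_rec[of 4] by simp
  have f: "r^7 = r^5 - r^6" using r_rec[of 5] by simp
  show "r^2 = 1 - r" "r^3 = 2*r - 1" "r^4 = 2 - 3*r" "r^5 = 5*r - 3"
    "r^6 = 5 - 8*r" "r^7 = 13*r - 8" using a b c d e f by linarith+
qed



definition sig :: "nat set \<Rightarrow> real" where "sig S = (\<Sum>i\<in>S. (-r)^(i+2))"
definition vv :: "nat set \<Rightarrow> nat" where "vv S = (\<Sum>i\<in>S. fib (i+1))"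

lemma fib_r: "real (fib (Suc (Suc i))) * r = real (fib (Suc i)) - (-r)^(Suc (Suc i))"
proof -
  have "real (fib (Suc (Suc i))) * r = real (fib (Suc i)) - (-r)^(Suc (Suc i)) \<and>
        real (fib (Suc (Suc (Suc i)))) * r = real (fib (Suc (Suc i))) - (-r)^(Suc (Suc (Suc i)))"
  proof (induction i)
    case 0
    have "fib (Suc (Suc (Suc 0))) = 2" by (simp add: fib.simps(3))
    moreover have "(-r)^(Suc (Suc 0)) = r^2" by (simp add: power2_eq_square)
    moreover have "(-r)^(Suc (Suc (Suc 0))) = -(r^3)" by (simp add: power3_eq_cube)
    ultimately show ?case using r_pows(1,2) by simp
  next
    case (Suc i)
    define t where "t = (-r)^(Suc (Suc i))"
    have t3: "(-r)^(Suc (Suc (Suc i))) = - (t * r)" unfolding t_def by simp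
    have t4: "(-r)^(Suc (Suc (Suc (Suc i)))) = t * (r * r)" unfolding t_def by simp
    have tr: "t * (r * r) = t - t * r" by (simp only: r_sq right_diff_distrib mult_1_right)
    have f4: "real (fib (Suc (Suc (Suc (Suc i))))) = real (fib (Suc (Suc (Suc i)))) + real (fib (Suc (Suc i)))"
      by (simp add: fib.simps(3))
    have f3: "real (fib (Suc (Suc (Suc i)))) = real (fib (Suc (Suc i))) + real (fib (Suc i))"
      by (simp add: fib.simps(3))
    have "real (fib (Suc (Suc (Suc (Suc i))))) * r
        = real (fib (Suc (Suc (Suc i)))) * r + real (fib (Suc (Suc i))) * r"
      using f4 by (simp add: algebra_simps)
    also have "\<dots> = real (fib (Suc (Suc i))) + t * r + real (fib (Suc i)) - t"
      using Suc.IH t3 unfolding t_def by simp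
    also have "\<dots> = real (fib (Suc (Suc (Suc i)))) - (-r)^(Suc (Suc (Suc (Suc i))))"
      using f3 t4 tr by simp
    finally show ?case using Suc.IH by simp
  qed
  then show ?thesis by simp
qed

lemma val_r: "real (val S) * r = real (vv S) - sig S"
proof -
  have "real (val S) * r = (\<Sum>i\<in>S. real (fib (Suc (Suc i))) * r)"
    unfolding val_def by (simp add: sum_distrib_right)
  also have "\<dots> = (\<Sum>i\<in>S. real (fib (Suc i)) - (-r)^(Suc (Suc i)))"
    using fib_r by simp
  also have "\<dots> = real (vv S) - sig S"
    unfolding vv_def sig_def by (simp add: sum_subtractf)
  finally show ?thesis .
qed

lemma sig_bound:
  "ncs T \<Longrightarrow> (\<forall>i\<in>T. j \<le> i) \<Longrightarrow>
    -(r^(j+2)) < (-1)^j * sig T \<and> (-1)^j * sig T < r^(j+1)"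
proof (induction "card T" arbitrary: T j rule: less_induct)
  case less
  have fin: "finite T" using less.prems by (simp add: ncs_def)
  show ?case
  proof (cases "T = {}")
    case True
    then show ?thesis using r_pos by (simp add: sig_def)
  next
    case False
    define m where "m = Min T"
    have mT: "m \<in> T" using fin False by (simp add: m_def)
    have mle: "\<forall>i\<in>T. m \<le> i" using fin by (simp add: m_def)
    have jm: "j \<le> m" using less.prems mT by blast
    define T' where "T' = T - {m}"
    have n': "ncs T'" using less.prems by (auto simp: ncs_def T'_def)
    have b': "\<forall>i\<in>T'. m + 2 \<le> i"
    proof
      fix i assume i: "i \<in> T'"
      then have "m \<le> i" "i \<noteq> m" using mle by (auto simp: T'_def)
      moreover have "i \<noteq> Suc m" using i mT less.prems by (auto simp: ncs_def T'_def)
      ultimately show "m + 2 \<le> i" by simp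
    qed
    have c: "card T' < card T" unfolding T'_def by (rule card_Diff1_less[OF fin mT])
    have IH: "-(r^(m+2+2)) < (-1)^(m+2) * sig T' \<and> (-1)^(m+2) * sig T' < r^(m+2+1)"
      by (rule less.hyps[OF c n' b'])
    define s :: real where "s = (-1)^m"
    have ss: "s * s = 1" unfolding s_def by (simp add: power_mult_distrib[symmetric])
    have sm2: "(-1::real)^(m+2) = s" unfolding s_def by simp
    define X where "X = s * sig T'"
    have X: "-(r^(m+4)) < X" "X < r^(m+3)" using IH sm2 unfolding X_def by (simp_all add: numeral_eq_Suc)
    have sigT: "sig T = (-r)^(m+2) + sig T'"
      unfolding sig_def T'_def by (simp only: sum.remove[OF fin mT])
    have pm: "(-r)^(m+2) = s * r^(m+2)" unfolding s_def power_minus[of r] by simp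
    have "s * sig T = s * (s * r^(m+2)) + s * sig T'" unfolding sigT pm by (simp only: distrib_left)
    moreover have "s * (s * r^(m+2)) = r^(m+2)" by (simp only: mult.assoc[symmetric] ss mult_1_left)
    ultimately have Y: "s * sig T = r^(m+2) + X" unfolding X_def by simp
    have r1: "r^(m+4) = r^(m+2) - r^(m+3)" using r_rec[of "m+2"] by (simp add: numeral_eq_Suc)
    have r2: "r^(m+3) = r^(m+1) - r^(m+2)" using r_rec[of "m+1"] by (simp add: numeral_eq_Suc)
    have p3: "0 < r^(m+3)" using r_pos by simp
    have Ylo: "0 < s * sig T" using Y X r1 p3 by linarith
    have Yhi: "s * sig T < r^(m+1)" using Y X r2 by linarith
    have mon: "\<And>a b. a \<le> b \<Longrightarrow> r^b \<le> r^a"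
      using r_pos r_lt1 by (intro power_decreasing) auto
    obtain d where d: "m = j + d" using jm le_Suc_ex by blast
    have sj: "s = (-1)^j * (-1)^d" unfolding s_def d by (simp add: power_add)
    show ?thesis
    proof (cases "even d")
      case True
      then have "(-1::real)^j = s" using sj by simp
      moreover have "r^(m+1) \<le> r^(j+1)" by (rule mon) (use jm in simp)
      moreover have "0 < r^(j+2)" using r_pos by simp
      ultimately show ?thesis using Ylo Yhi by auto
    next
      case False
      then have "(-1::real)^j = - s" using sj by simp
      moreover have "d \<ge> 1" using False by (cases d) auto
      then have "r^(m+1) \<le> r^(j+2)" by (intro mon) (use d in simp)
      moreover have "0 < r^(j+1)" using r_pos by simp
      ultimately show ?thesis using Ylo Yhi by auto
    qed
  qed
qed



definition Ta :: "nat \<Rightarrow> bool" where "Ta N \<longleftrightarrow> frac ((real N + 2) * r) < r^2"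
definition Tb1 :: "nat \<Rightarrow> bool" where "Tb1 N \<longleftrightarrow> frac ((real N + 2) * r) > 2 * r^2"
definition Tb2 :: "nat \<Rightarrow> bool" where "Tb2 N \<longleftrightarrow> frac ((real N + 3) * r) < r^4"
definition Tc :: "nat \<Rightarrow> bool" where "Tc N \<longleftrightarrow> frac ((real N + 4) * r) > 2 * r^2"

lemma frac_shift:
  assumes "x = of_int v + y" "of_int k \<le> y" "y < of_int k + 1"
  shows "frac x = y - of_int k"
proof -
  have "\<lfloor>x\<rfloor> = v + k" using assms by (intro floor_unique) auto
  then show ?thesis unfolding frac_def using assms(1) by simp
qed

lemma x_shift: "ncs S \<Longrightarrow> (real (val S) + c) * r = of_int (int (vv S)) + (c * r - sig S)"
  using val_r[of S] by (simp add: algebra_simps)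

lemma sig_remove:
  assumes "ncs S" "j \<in> S" shows "sig S = (-r)^(j+2) + sig (S - {j})"
proof -
  have fin: "finite S" using assms by (simp add: ncs_def)
  show ?thesis by (simp only: sig_def sum.remove[OF fin assms(2)])
qed

lemma ncs_diff: "ncs S \<Longrightarrow> ncs (S - A)"
  unfolding ncs_def by auto

lemma negr: "(-r)^2 = r^2" "(-r)^3 = -(r^3)" "(-r)^4 = r^4" "(-r)^5 = -(r^5)"
  by (simp_all add: power_minus[of r])

lemmas rp = r_pows r_bounds

lemma notin_neq: "i \<in> S \<Longrightarrow> k \<notin> S \<Longrightarrow> i \<noteq> k" by auto

lemma cls_incr:
  assumes S: "ncs S" "0 \<notin> S" "1 \<notin> S"
  shows "Ta (val S)"
proof -
  have b: "\<forall>i\<in>S. 2 \<le> i"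
  proof
    fix i assume i: "i \<in> S" then have "i \<noteq> 0" "i \<noteq> 1" using notin_neq[OF i] S by auto
    then show "2 \<le> i" by arith
  qed
  have B: "-(r^4) < sig S" "sig S < r^3" using sig_bound[OF S(1) b] by simp_all
  have "frac ((real (val S) + 2) * r) = (2 * r - sig S) - of_int 1"
    by (rule frac_shift[OF x_shift[OF S(1)]]) (use B rp in auto)
  then show ?thesis unfolding Ta_def using B rp by simp
qed

lemma cls_const0:
  assumes S: "ncs S" "0 \<in> S" "2 \<notin> S"
  shows "Tb1 (val S)"
proof -
  have "1 \<notin> S" using S by (auto simp: ncs_def)
  then have b: "\<forall>i\<in>S - {0}. 3 \<le> i"
  proof -
    assume n1: "1 \<notin> S"
    show ?thesis
    proof
      fix i assume i: "i \<in> S - {0}" then have "i \<noteq> 0" "i \<noteq> 1" "i \<noteq> 2" using notin_neq[OF DiffD1[OF i]] S n1 by auto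
      then show "3 \<le> i" by arith
    qed
  qed
  have B: "-(r^5) < - sig (S - {0})" "- sig (S - {0}) < r^4"
    using sig_bound[OF ncs_diff[OF S(1)] b] by simp_all
  have e: "sig S = r^2 + sig (S - {0})" using sig_remove[OF S(1,2)] by (simp add: power2_eq_square)
  have "frac ((real (val S) + 2) * r) = (2 * r - sig S) - of_int 0"
    by (rule frac_shift[OF x_shift[OF S(1)]]) (use B e rp in auto)
  then show ?thesis unfolding Tb1_def using B e rp by simp
qed

lemma cls_const1:
  assumes S: "ncs S" "1 \<in> S" "3 \<notin> S"
  shows "Tb2 (val S)"
proof -
  have "0 \<notin> S" "2 \<notin> S" using S by (auto simp: ncs_def numeral_2_eq_2)
  then have b: "\<forall>i\<in>S - {1}. 4 \<le> i"
  proof -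
    assume n: "0 \<notin> S" "2 \<notin> S"
    show ?thesis
    proof
      fix i assume i: "i \<in> S - {1}" then have "i \<noteq> 0" "i \<noteq> 1" "i \<noteq> 2" "i \<noteq> 3" using notin_neq[OF DiffD1[OF i]] S n by auto
      then show "4 \<le> i" by arith
    qed
  qed
  have B: "-(r^6) < sig (S - {1})" "sig (S - {1}) < r^5"
    using sig_bound[OF ncs_diff[OF S(1)] b] by simp_all
  have e: "sig S = -(r^3) + sig (S - {1})" using sig_remove[OF S(1,2)] by (simp add: power_minus[of r] power3_eq_cube)
  have "frac ((real (val S) + 3) * r) = (3 * r - sig S) - of_int 2"
    by (rule frac_shift[OF x_shift[OF S(1)]]) (use B e rp in auto)
  then show ?thesis unfolding Tb2_def using B e rp by simp
qed

lemma cls_decr0: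
  assumes S: "ncs S" "0 \<in> S" "2 \<in> S"
  shows "Tc (val S)"
proof -
  have n: "1 \<notin> S" "3 \<notin> S" using S by (auto simp: ncs_def numeral_eq_Suc)
  have b: "\<forall>i\<in>S - {0} - {2}. 4 \<le> i"
  proof
    fix i assume i: "i \<in> S - {0} - {2}"
    then have "i \<noteq> 0" "i \<noteq> 1" "i \<noteq> 2" "i \<noteq> 3" using notin_neq[OF DiffD1[OF DiffD1[OF i]]] n by auto
    then show "4 \<le> i" by arith
  qed
  have S0: "ncs (S - {0})" "2 \<in> S - {0}" using S ncs_diff by auto
  have B: "-(r^6) < sig (S - {0} - {2})" "sig (S - {0} - {2}) < r^5"
    using sig_bound[OF ncs_diff[OF S0(1)] b] by simp_all
  have e1: "sig S = r^2 + sig (S - {0})" using sig_remove[OF S(1,2)] by (simp add: power2_eq_square)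
  have e2: "sig (S - {0}) = r^4 + sig (S - {0} - {2})" using sig_remove[OF S0]
    by (simp add: power_minus[of r])
  have "frac ((real (val S) + 4) * r) = (4 * r - sig S) - of_int 1"
    by (rule frac_shift[OF x_shift[OF S(1)]]) (use B e1 e2 rp in auto)
  then show ?thesis unfolding Tc_def using B e1 e2 rp by simp
qed

lemma cls_decr1:
  assumes S: "ncs S" "1 \<in> S" "3 \<in> S"
  shows "Tc (val S)"
proof -
  have n: "0 \<notin> S" "2 \<notin> S" "4 \<notin> S" using S by (auto simp: ncs_def numeral_eq_Suc)
  have b: "\<forall>i\<in>S - {1} - {3}. 5 \<le> i"
  proof
    fix i assume i: "i \<in> S - {1} - {3}"
    then have "i \<noteq> 0" "i \<noteq> 1" "i \<noteq> 2" "i \<noteq> 3" "i \<noteq> 4"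
      using notin_neq[OF DiffD1[OF DiffD1[OF i]]] n by auto
    then show "5 \<le> i" by arith
  qed
  have S0: "ncs (S - {1})" "3 \<in> S - {1}" using S ncs_diff by auto
  have B: "-(r^7) < - sig (S - {1} - {3})" "- sig (S - {1} - {3}) < r^6"
    using sig_bound[OF ncs_diff[OF S0(1)] b] by simp_all
  have e1: "sig S = -(r^3) + sig (S - {1})" using sig_remove[OF S(1,2)]
    by (simp add: power_minus[of r] power3_eq_cube)
  have e2: "sig (S - {1}) = -(r^5) + sig (S - {1} - {3})" using sig_remove[OF S0]
    by (simp add: power_minus[of r])
  have "frac ((real (val S) + 4) * r) = (4 * r - sig S) - of_int 2"
    by (rule frac_shift[OF x_shift[OF S(1)]]) (use B e1 e2 rp in auto)
  then show ?thesis unfolding Tc_def using B e1 e2 rp by simp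
qed

lemma fib_small: "j \<le> 1 \<Longrightarrow> fib (j + 1) = 1"
  by (cases j) auto

lemma d_incr: "ncs S \<Longrightarrow> 0 \<notin> S \<Longrightarrow> 1 \<notin> S \<Longrightarrow> val S \<in> incr_pts"
proof -
  assume S: "ncs S" "0 \<notin> S" "1 \<notin> S"
  have n: "ncs (insert 0 S)" using S by (auto simp: ncs_def)
  have "val (insert 0 S) = fib (0+2) + val S"
    unfolding val_def by (rule sum.insert) (use S in \<open>auto simp: ncs_def\<close>)
  then have v: "val (insert 0 S) = Suc (val S)" by simp
  have c: "card (insert 0 S) = Suc (card S)" using S by (simp add: ncs_def)
  have "sZ (Suc (val S)) = Suc (card S)" using sZ_eq[OF n] v c by simp
  moreover have "sZ (val S) = card S" using sZ_eq[OF S(1)] .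
  ultimately show ?thesis unfolding incr_pts_def by simp
qed

lemma d_const: "ncs S \<Longrightarrow> j \<le> 1 \<Longrightarrow> j \<in> S \<Longrightarrow> j + 2 \<notin> S \<Longrightarrow> val S \<in> const_pts"
proof -
  assume S: "ncs S" "j \<le> 1" "j \<in> S" "j + 2 \<notin> S"
  obtain S' where S': "ncs S'" "val S' = val S + fib (j + 1)" "card S' = card S"
    using carry[OF S(1) S(3)] S(4) by blast
  have "sZ (Suc (val S)) = card S" using sZ_eq[OF S'(1)] S' fib_small[OF S(2)] by simp
  moreover have "sZ (val S) = card S" using sZ_eq[OF S(1)] .
  ultimately show ?thesis unfolding const_pts_def by simp
qed

lemma d_decr: "ncs S \<Longrightarrow> j \<le> 1 \<Longrightarrow> j \<in> S \<Longrightarrow> j + 2 \<in> S \<Longrightarrow> val S \<in> decr_pts"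
proof -
  assume S: "ncs S" "j \<le> 1" "j \<in> S" "j + 2 \<in> S"
  obtain S' where S': "ncs S'" "val S' = val S + fib (j + 1)" "card S' < card S"
    using carry[OF S(1) S(3)] S(4) by blast
  have "sZ (Suc (val S)) < card S" using sZ_eq[OF S'(1)] S' fib_small[OF S(2)] by simp
  moreover have "sZ (val S) = card S" using sZ_eq[OF S(1)] .
  ultimately show ?thesis unfolding decr_pts_def by simp
qed

lemma classify:
  "(N \<in> incr_pts \<and> Ta N) \<or> (N \<in> const_pts \<and> (Tb1 N \<or> Tb2 N)) \<or> (N \<in> decr_pts \<and> Tc N)"
proof -
  obtain S where S: "ncs S" "val S = N" using zeck_exists by blast
  show ?thesis
  proof (cases "0 \<in> S")
    case T0: True
    show ?thesis
    proof (cases "2 \<in> S")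
      case True
      then have h: "0 + 2 \<in> S" by (simp add: numeral_eq_Suc)
      have "val S \<in> decr_pts" by (rule d_decr[OF S(1) _ T0 h]) simp
      moreover have "Tc (val S)" using cls_decr0[OF S(1) T0 True] .
      ultimately show ?thesis using S(2) by blast
    next
      case False
      then have h: "0 + 2 \<notin> S" by (simp add: numeral_eq_Suc)
      have "val S \<in> const_pts" by (rule d_const[OF S(1) _ T0 h]) simp
      moreover have "Tb1 (val S)" using cls_const0[OF S(1) T0 False] .
      ultimately show ?thesis using S(2) by blast
    qed
  next
    case F0: False
    show ?thesis
    proof (cases "1 \<in> S")
      case T1: True
      show ?thesis
      proof (cases "3 \<in> S")
        case True
        then have h: "1 + 2 \<in> S" by (simp add: numeral_eq_Suc)
        have "val S \<in> decr_pts" by (rule d_decr[OF S(1) _ T1 h]) simp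
        moreover have "Tc (val S)" using cls_decr1[OF S(1) T1 True] .
        ultimately show ?thesis using S(2) by blast
      next
        case False
        then have h: "1 + 2 \<notin> S" by (simp add: numeral_eq_Suc)
        have "val S \<in> const_pts" by (rule d_const[OF S(1) _ T1 h]) simp
        moreover have "Tb2 (val S)" using cls_const1[OF S(1) T1 False] .
        ultimately show ?thesis using S(2) by blast
      qed
    next
      case False
      then show ?thesis using d_incr[OF S(1) F0] cls_incr[OF S(1) F0] S(2) by auto
    qed
  qed
qed



lemma frac_add_r:
  assumes "of_int k \<le> frac x + y" "frac x + y < of_int k + 1"
  shows "frac (x + y) = frac x + y - of_int k"
  by (rule frac_shift[of _ "\<lfloor>x\<rfloor>"]) (use assms in \<open>simp_all add: frac_def\<close>)

lemma ex_ab1: "Ta N \<Longrightarrow> \<not> Tb1 N"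
proof -
  have "0 < r^2" using r_pos by simp
  then show "Ta N \<Longrightarrow> \<not> Tb1 N" unfolding Ta_def Tb1_def by linarith
qed

lemma ex_ab2: "Ta N \<Longrightarrow> \<not> Tb2 N"
proof -
  assume a: "Ta N"
  define X where "X = (real N + 2) * r"
  have aT: "frac X < r^2" using a unfolding Ta_def X_def .
  have a0: "0 \<le> frac X" by simp
  have "(real N + 3) * r = X + r" unfolding X_def by (simp add: algebra_simps)
  moreover have "frac (X + r) = frac X + r - of_int 0"
  proof (rule frac_add_r)
    have "0 \<le> frac X + r" "frac X + r < 0 + 1" using aT a0 rp frac_ge_0[of X] frac_lt_1[of X] by linarith+
    then show "of_int 0 \<le> frac X + r" "frac X + r < of_int 0 + 1" by simp_all
  qed
  ultimately have "frac ((real N + 3) * r) = frac X + r" by simp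
  then show ?thesis unfolding Tb2_def using aT a0 rp by linarith
qed

lemma ex_ac: "Ta N \<Longrightarrow> \<not> Tc N"
proof -
  assume a: "Ta N"
  define X where "X = (real N + 2) * r"
  have aT: "frac X < r^2" using a unfolding Ta_def X_def .
  have a0: "0 \<le> frac X" by simp
  have "(real N + 4) * r = X + 2 * r" unfolding X_def by (simp add: algebra_simps)
  moreover have "frac (X + 2 * r) = frac X + 2 * r - of_int 1"
  proof (rule frac_add_r)
    have "1 \<le> frac X + 2 * r" "frac X + 2 * r < 1 + 1" using aT a0 rp frac_ge_0[of X] frac_lt_1[of X] by linarith+
    then show "of_int 1 \<le> frac X + 2 * r" "frac X + 2 * r < of_int 1 + 1" by simp_all
  qed
  ultimately have "frac ((real N + 4) * r) = frac X + 2 * r - 1" by simp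
  then show ?thesis unfolding Tc_def using aT a0 rp by linarith
qed

lemma ex_b1c: "Tb1 N \<Longrightarrow> \<not> Tc N"
proof -
  assume a: "Tb1 N"
  define X where "X = (real N + 2) * r"
  have aT: "frac X > 2 * r^2" using a unfolding Tb1_def X_def .
  have a1: "frac X < 1" by (simp add: frac_lt_1)
  have "(real N + 4) * r = X + 2 * r" unfolding X_def by (simp add: algebra_simps)
  moreover have "frac (X + 2 * r) = frac X + 2 * r - of_int 2"
  proof (rule frac_add_r)
    have "2 \<le> frac X + 2 * r" "frac X + 2 * r < 2 + 1" using aT a1 rp frac_ge_0[of X] frac_lt_1[of X] by linarith+
    then show "of_int 2 \<le> frac X + 2 * r" "frac X + 2 * r < of_int 2 + 1" by simp_all
  qed
  ultimately have "frac ((real N + 4) * r) = frac X + 2 * r - 2" by simp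
  then show ?thesis unfolding Tc_def using aT a1 rp by linarith
qed

lemma ex_b2c: "Tb2 N \<Longrightarrow> \<not> Tc N"
proof -
  assume a: "Tb2 N"
  define X where "X = (real N + 3) * r"
  have aT: "frac X < r^4" using a unfolding Tb2_def X_def .
  have a0: "0 \<le> frac X" by simp
  have "(real N + 4) * r = X + r" unfolding X_def by (simp add: algebra_simps)
  moreover have "frac (X + r) = frac X + r - of_int 0"
  proof (rule frac_add_r)
    have "0 \<le> frac X + r" "frac X + r < 0 + 1" using aT a0 rp frac_ge_0[of X] frac_lt_1[of X] by linarith+
    then show "of_int 0 \<le> frac X + r" "frac X + r < of_int 0 + 1" by simp_all
  qed
  ultimately have "frac ((real N + 4) * r) = frac X + r" by simp
  then show ?thesis unfolding Tc_def using aT a0 rp by linarith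
qed

lemma disj: "N \<in> incr_pts \<Longrightarrow> N \<notin> const_pts" "N \<in> incr_pts \<Longrightarrow> N \<notin> decr_pts"
  "N \<in> const_pts \<Longrightarrow> N \<notin> decr_pts"
  unfolding incr_pts_def const_pts_def decr_pts_def by auto

lemma incr_eq: "incr_pts = {N. Ta N}"
proof (intro set_eqI iffI)
  fix N assume "N \<in> incr_pts" then show "N \<in> {N. Ta N}" using classify[of N] disj by blast
next
  fix N assume "N \<in> {N. Ta N}" then have "Ta N" by simp
  then show "N \<in> incr_pts" using classify[of N] ex_ab1 ex_ab2 ex_ac by blast
qed

lemma const_eq: "const_pts = {N. Tb1 N \<or> Tb2 N}"
proof (intro set_eqI iffI)
  fix N assume "N \<in> const_pts" then show "N \<in> {N. Tb1 N \<or> Tb2 N}" using classify[of N] disj by blast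
next
  fix N assume "N \<in> {N. Tb1 N \<or> Tb2 N}" then have "Tb1 N \<or> Tb2 N" by simp
  then show "N \<in> const_pts" using classify[of N] ex_ab1 ex_ab2 ex_b1c ex_b2c by blast
qed

lemma decr_eq: "decr_pts = {N. Tc N}"
proof (intro set_eqI iffI)
  fix N assume "N \<in> decr_pts" then show "N \<in> {N. Tc N}" using classify[of N] disj by blast
next
  fix N assume "N \<in> {N. Tc N}" then have "Tc N" by simp
  then show "N \<in> decr_pts" using classify[of N] ex_ac ex_b1c ex_b2c by blast
qed



lemma no_sol: "0 < n \<Longrightarrow> (q::int)^2 + q * int n \<noteq> int n ^ 2"
proof (induction n arbitrary: q rule: less_induct)
  case (less n)
  show ?case
  proof
    assume eq: "q^2 + q * int n = int n ^ 2"
    show False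
    proof (cases "even n")
      case False
      have "even (q^2 + q * int n)"
      proof (cases "even q")
        case True then show ?thesis by simp
      next
        case oq: False
        have "q^2 + q * int n = q * (q + int n)" by (simp add: power2_eq_square algebra_simps)
        moreover have "even (q + int n)" using oq False by simp
        ultimately show ?thesis by simp
      qed
      moreover have "odd (int n ^ 2)" using False by simp
      ultimately show False using eq by simp
    next
      case True
      then obtain m where m: "n = 2 * m" by blast
      have m0: "m < n" "0 < m" using less.prems m by auto
      have "q^2 = 2 * (2 * int m^2 - q * int m)" using eq m by (simp add: algebra_simps power2_eq_square)
      then have "even (q^2)" by simp
      then have "even q" by simp
      then obtain p where p: "q = 2 * p" by blast
      have "4 * (p^2 + p * int m) = 4 * int m ^ 2" using eq m p by (simp add: algebra_simps power2_eq_square)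
      then have "p^2 + p * int m = int m ^2" by simp
      then show False using less.IH[OF m0(1) m0(2)] by blast
    qed
  qed
qed

lemma irr: "1 \<le> n \<Longrightarrow> real n * r \<noteq> of_int q"
proof
  assume n: "1 \<le> n" and e: "real n * r = of_int q"
  have "(real n * r) * (real n * r) + (real n * r) * real n = real n * real n"
    using r_sq by algebra
  then have "of_int q * of_int q + of_int q * real n = real n * real n" unfolding e .
  then have "real_of_int (q^2 + q * int n) = real_of_int (int n ^ 2)" by (simp add: power2_eq_square)
  then have "q^2 + q * int n = int n ^ 2" by (simp only: of_int_eq_iff)
  then show False using no_sol[of n q] n by simp
qed

lemma pos_arg:
  fixes ni q :: int
  assumes "of_int q \<le> of_int ni * r" "1 \<le> c * ni + d * q" "0 < c" "0 \<le> d"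
  shows "1 \<le> ni"
proof (rule ccontr)
  assume "\<not> 1 \<le> ni"
  then have "ni \<le> 0" by simp
  then have "of_int ni * r \<le> 0" using r_pos by (simp add: mult_nonpos_nonneg)
  then have "q \<le> 0" using assms(1) by linarith
  then have "c * ni + d * q \<le> 0" using \<open>ni \<le> 0\<close> assms(3,4)
    by (meson add_nonpos_nonpos mult_nonneg_nonpos less_imp_le)
  then show False using assms(2) by simp
qed

lemma r2_id: "r^2 * (2 + r) = 1" using r_sq by algebra
lemma r3_id: "(3 + 2 * r) * r^3 = 1" using r_sq by algebra
lemma r4_id: "r^4 * (5 + 3 * r) = 1" using r_sq by algebra

lemma coreA:
  fixes M :: int assumes M: "1 \<le> M"
  shows "(\<exists>n::nat. 1 \<le> n \<and> M = 2 * int n + \<lfloor>real n * r\<rfloor>) \<longleftrightarrow> frac (of_int M * r) < r^2"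
proof
  assume "\<exists>n::nat. 1 \<le> n \<and> M = 2 * int n + \<lfloor>real n * r\<rfloor>"
  then obtain n :: nat where n: "1 \<le> n" "M = 2 * int n + \<lfloor>real n * r\<rfloor>" by blast
  define q where "q = \<lfloor>real n * r\<rfloor>"
  define f where "f = frac (real n * r)"
  have fq: "real n * r = of_int q + f" unfolding f_def q_def frac_def by simp
  have f01: "0 \<le> f" "f < 1" unfolding f_def by (simp_all add: frac_lt_1)
  have Mq: "of_int M = 2 * real n + of_int q" using n(2) unfolding q_def by simp
  have "of_int M * r = (real n + of_int q) + f * r^2" using Mq fq r_sq by algebra
  then have x: "of_int M * r = of_int (int n + q) + f * r^2" by simp
  have r2: "0 < r^2" "r^2 < 1" using rp by auto
  have fr: "f * r^2 < r^2" using f01 r2 by (simp add: mult_strict_right_mono)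
  have "frac (of_int M * r) = f * r^2 - of_int 0"
    by (rule frac_shift[OF x]) (use f01 r2 fr in \<open>simp_all, linarith\<close>)
  then show "frac (of_int M * r) < r^2" using fr by simp
next
  assume g: "frac (of_int M * r) < r^2"
  define a where "a = \<lfloor>of_int M * r\<rfloor>"
  define g' where "g' = frac (of_int M * r)"
  have ga: "of_int M * r = of_int a + g'" unfolding a_def g'_def frac_def by simp
  have g0: "0 \<le> g'" unfolding g'_def by simp
  define ni where "ni = M - a"
  define q where "q = 2 * a - M"
  have "(of_int M - of_int a) * r = (2 * of_int a - of_int M) + g' * (2 + r)"
    using ga r_sq by algebra
  then have key: "of_int ni * r = of_int q + g' * (2 + r)" unfolding ni_def q_def by simp
  have b1: "g' * (2 + r) < 1" using g r2_id r_pos unfolding g'_def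
    by (metis mult_strict_right_mono add_pos_pos zero_less_numeral)
  have b0: "0 \<le> g' * (2 + r)" using g0 r_pos by simp
  have fl: "\<lfloor>of_int ni * r\<rfloor> = q" using key b0 b1 by (intro floor_unique) auto
  have Mn: "M = 2 * ni + q" unfolding ni_def q_def by simp
  have n1: "1 \<le> ni"
    by (rule pos_arg[of q ni 2 1]) (use key b0 Mn M in auto)
  have rn: "real (nat ni) = of_int ni" using n1 by simp
  show "\<exists>n::nat. 1 \<le> n \<and> M = 2 * int n + \<lfloor>real n * r\<rfloor>"
    by (rule exI[of _ "nat ni"]) (use n1 rn fl Mn in simp)
qed

lemma coreB:
  fixes M :: int assumes M: "1 \<le> M"
  shows "(\<exists>n::nat. 1 \<le> n \<and> M = 3 * int n + 2 * \<lfloor>real n * r\<rfloor>) \<longleftrightarrow> frac (of_int M * r) > 2 * r^2"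
proof
  assume "\<exists>n::nat. 1 \<le> n \<and> M = 3 * int n + 2 * \<lfloor>real n * r\<rfloor>"
  then obtain n :: nat where n: "1 \<le> n" "M = 3 * int n + 2 * \<lfloor>real n * r\<rfloor>" by blast
  define q where "q = \<lfloor>real n * r\<rfloor>"
  define f where "f = frac (real n * r)"
  have fq: "real n * r = of_int q + f" unfolding f_def q_def frac_def by simp
  have f01: "0 \<le> f" "f < 1" unfolding f_def by (simp_all add: frac_lt_1)
  have fpos: "f \<noteq> 0" using irr[OF n(1), of q] fq by auto
  have Mq: "of_int M = 3 * real n + 2 * of_int q" using n(2) unfolding q_def by simp
  have "of_int M * r = (2 * real n + of_int q) - f * r^3" using Mq fq r_sq by algebra
  then have x: "of_int M * r = of_int (2 * int n + q) + (- (f * r^3))" by simp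
  have r3: "0 < r^3" "r^3 < 1" using rp by auto
  have fr: "f * r^3 < r^3" "0 < f * r^3" using f01 fpos r3 by (simp_all add: mult_strict_right_mono)
  have "frac (of_int M * r) = - (f * r^3) - of_int (-1)"
    by (rule frac_shift[OF x]) (use fr r3 in \<open>simp_all, linarith\<close>)
  then have "frac (of_int M * r) = 1 - f * r^3" by simp
  then show "frac (of_int M * r) > 2 * r^2" using fr rp by linarith
next
  assume g: "frac (of_int M * r) > 2 * r^2"
  define a where "a = \<lfloor>of_int M * r\<rfloor>"
  define g' where "g' = frac (of_int M * r)"
  have ga: "of_int M * r = of_int a + g'" unfolding a_def g'_def frac_def by simp
  have g1: "g' < 1" unfolding g'_def by (simp add: frac_lt_1)
  define ni where "ni = 2 * a + 2 - M"
  define q where "q = 2 * M - 3 * a - 3"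
  have "(2 * of_int a + 2 - of_int M) * r = (2 * of_int M - 3 * of_int a - 3) + (3 + 2 * r) * (1 - g')"
    using ga r_sq by algebra
  then have key: "of_int ni * r = of_int q + (3 + 2 * r) * (1 - g')" unfolding ni_def q_def by simp
  have "1 - g' < r^3" using g rp unfolding g'_def by simp
  then have b1: "(3 + 2 * r) * (1 - g') < 1" using r3_id r_pos
    by (metis mult_strict_left_mono add_pos_pos zero_less_numeral mult_pos_pos)
  have b0: "0 \<le> (3 + 2 * r) * (1 - g')" using g1 r_pos by simp
  have fl: "\<lfloor>of_int ni * r\<rfloor> = q" using key b0 b1 by (intro floor_unique) auto
  have Mn: "M = 3 * ni + 2 * q" unfolding ni_def q_def by simp
  have n1: "1 \<le> ni"
    by (rule pos_arg[of q ni 3 2]) (use key b0 Mn M in auto)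
  have rn: "real (nat ni) = of_int ni" using n1 by simp
  show "\<exists>n::nat. 1 \<le> n \<and> M = 3 * int n + 2 * \<lfloor>real n * r\<rfloor>"
    by (rule exI[of _ "nat ni"]) (use n1 rn fl Mn in simp)
qed

lemma coreC:
  fixes M :: int assumes M: "1 \<le> M"
  shows "(\<exists>n::nat. 1 \<le> n \<and> M = 5 * int n + 3 * \<lfloor>real n * r\<rfloor>) \<longleftrightarrow> frac (of_int M * r) < r^4"
proof
  assume "\<exists>n::nat. 1 \<le> n \<and> M = 5 * int n + 3 * \<lfloor>real n * r\<rfloor>"
  then obtain n :: nat where n: "1 \<le> n" "M = 5 * int n + 3 * \<lfloor>real n * r\<rfloor>" by blast
  define q where "q = \<lfloor>real n * r\<rfloor>"
  define f where "f = frac (real n * r)"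
  have fq: "real n * r = of_int q + f" unfolding f_def q_def frac_def by simp
  have f01: "0 \<le> f" "f < 1" unfolding f_def by (simp_all add: frac_lt_1)
  have Mq: "of_int M = 5 * real n + 3 * of_int q" using n(2) unfolding q_def by simp
  have "of_int M * r = (3 * real n + 2 * of_int q) + f * r^4" using Mq fq r_sq by algebra
  then have x: "of_int M * r = of_int (3 * int n + 2 * q) + f * r^4" by simp
  have r4: "0 < r^4" "r^4 < 1" using rp by auto
  have fr: "f * r^4 < r^4" using f01 r4 by (simp add: mult_strict_right_mono)
  have "frac (of_int M * r) = f * r^4 - of_int 0"
    by (rule frac_shift[OF x]) (use f01 r4 fr in \<open>simp_all, linarith\<close>)
  then show "frac (of_int M * r) < r^4" using fr by simp
next
  assume g: "frac (of_int M * r) < r^4"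
  define a where "a = \<lfloor>of_int M * r\<rfloor>"
  define g' where "g' = frac (of_int M * r)"
  have ga: "of_int M * r = of_int a + g'" unfolding a_def g'_def frac_def by simp
  have g0: "0 \<le> g'" unfolding g'_def by simp
  define ni where "ni = 2 * M - 3 * a"
  define q where "q = 5 * a - 3 * M"
  have "(2 * of_int M - 3 * of_int a) * r = (5 * of_int a - 3 * of_int M) + g' * (5 + 3 * r)"
    using ga r_sq by algebra
  then have key: "of_int ni * r = of_int q + g' * (5 + 3 * r)" unfolding ni_def q_def by simp
  have b1: "g' * (5 + 3 * r) < 1" using g r4_id r_pos unfolding g'_def
    by (metis mult_strict_right_mono add_pos_pos zero_less_numeral mult_pos_pos)
  have b0: "0 \<le> g' * (5 + 3 * r)" using g0 r_pos by simp
  have fl: "\<lfloor>of_int ni * r\<rfloor> = q" using key b0 b1 by (intro floor_unique) auto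
  have Mn: "M = 5 * ni + 3 * q" unfolding ni_def q_def by simp
  have n1: "1 \<le> ni"
    by (rule pos_arg[of q ni 5 3]) (use key b0 Mn M in auto)
  have rn: "real (nat ni) = of_int ni" using n1 by simp
  show "\<exists>n::nat. 1 \<le> n \<and> M = 5 * int n + 3 * \<lfloor>real n * r\<rfloor>"
    by (rule exI[of _ "nat ni"]) (use n1 rn fl Mn in simp)
qed



lemma fl_phi: "\<lfloor>real n * phi\<rfloor> = int n + \<lfloor>real n * r\<rfloor>"
proof -
  have "real n * phi = real n * r + of_int (int n)" unfolding r_def by (simp add: algebra_simps)
  then show ?thesis by (simp add: floor_add_int[symmetric])
qed

lemma fl_nonneg: "0 \<le> \<lfloor>real n * r\<rfloor>"
  using r_pos by simp

lemma fl_mono: "\<lfloor>real n * r\<rfloor> \<le> \<lfloor>real (Suc n) * r\<rfloor>"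
  using r_pos by (intro floor_mono) (simp add: mult_right_mono)

lemma enum_range:
  fixes h :: "nat \<Rightarrow> nat"
  assumes h: "strict_mono h"
  shows "enumerate (range h) n = h n"
proof (induction n)
  case 0
  show ?case unfolding enumerate_0
  proof (rule Least_equality)
    show "h 0 \<in> range h" by simp
  next
    fix y assume "y \<in> range h"
    then obtain k where "y = h k" by blast
    then show "h 0 \<le> y" using h by (simp add: strict_mono_less_eq)
  qed
next
  case (Suc n)
  have inf: "infinite (range h)" using h strict_mono_imp_inj_on range_inj_infinite by blast
  show ?case unfolding enumerate_Suc''[OF inf] Suc
  proof (rule Least_equality)
    show "h (Suc n) \<in> range h \<and> h n < h (Suc n)" using h by (simp add: strict_mono_less)
  next
    fix y assume "y \<in> range h \<and> h n < y"
    then obtain k where k: "y = h k" "h n < h k" by blast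
    then have "n < k" using h by (simp add: strict_mono_less)
    then show "h (Suc n) \<le> y" using h k by (simp add: strict_mono_less_eq)
  qed
qed

lemma incr_char: "N \<in> incr_pts \<longleftrightarrow> (\<exists>n::nat. 1 \<le> n \<and> int N = \<lfloor>real n * phi\<rfloor> + int n - 2)"
proof -
  have "N \<in> incr_pts \<longleftrightarrow> frac (of_int (int N + 2) * r) < r^2"
    unfolding incr_eq Ta_def by simp
  also have "\<dots> \<longleftrightarrow> (\<exists>n::nat. 1 \<le> n \<and> int N + 2 = 2 * int n + \<lfloor>real n * r\<rfloor>)"
    by (rule coreA[symmetric]) simp
  also have "\<dots> \<longleftrightarrow> (\<exists>n::nat. 1 \<le> n \<and> int N = \<lfloor>real n * phi\<rfloor> + int n - 2)"
    unfolding fl_phi by (intro ex_cong1) auto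
  finally show ?thesis .
qed

lemma tb1_char: "Tb1 N \<longleftrightarrow> (\<exists>n::nat. 1 \<le> n \<and> int N = 2 * \<lfloor>real n * phi\<rfloor> + int n - 2)"
proof -
  have "Tb1 N \<longleftrightarrow> frac (of_int (int N + 2) * r) > 2 * r^2"
    unfolding Tb1_def by simp
  also have "\<dots> \<longleftrightarrow> (\<exists>n::nat. 1 \<le> n \<and> int N + 2 = 3 * int n + 2 * \<lfloor>real n * r\<rfloor>)"
    by (rule coreB[symmetric]) simp
  also have "\<dots> \<longleftrightarrow> (\<exists>n::nat. 1 \<le> n \<and> int N = 2 * \<lfloor>real n * phi\<rfloor> + int n - 2)"
    unfolding fl_phi by (intro ex_cong1) auto
  finally show ?thesis .
qed

lemma tb2_char: "Tb2 N \<longleftrightarrow> (\<exists>n::nat. 1 \<le> n \<and> int N = 3 * \<lfloor>real n * phi\<rfloor> + 2 * int n - 3)"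
proof -
  have "Tb2 N \<longleftrightarrow> frac (of_int (int N + 3) * r) < r^4"
    unfolding Tb2_def by simp
  also have "\<dots> \<longleftrightarrow> (\<exists>n::nat. 1 \<le> n \<and> int N + 3 = 5 * int n + 3 * \<lfloor>real n * r\<rfloor>)"
    by (rule coreC[symmetric]) simp
  also have "\<dots> \<longleftrightarrow> (\<exists>n::nat. 1 \<le> n \<and> int N = 3 * \<lfloor>real n * phi\<rfloor> + 2 * int n - 3)"
    unfolding fl_phi by (intro ex_cong1) auto
  finally show ?thesis .
qed

lemma decr_char: "N \<in> decr_pts \<longleftrightarrow> (\<exists>n::nat. 1 \<le> n \<and> int N = 2 * \<lfloor>real n * phi\<rfloor> + int n - 4)"
proof -
  have "N \<in> decr_pts \<longleftrightarrow> frac (of_int (int N + 4) * r) > 2 * r^2"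
    unfolding decr_eq Tc_def by simp
  also have "\<dots> \<longleftrightarrow> (\<exists>n::nat. 1 \<le> n \<and> int N + 4 = 3 * int n + 2 * \<lfloor>real n * r\<rfloor>)"
    by (rule coreB[symmetric]) simp
  also have "\<dots> \<longleftrightarrow> (\<exists>n::nat. 1 \<le> n \<and> int N = 2 * \<lfloor>real n * phi\<rfloor> + int n - 4)"
    unfolding fl_phi by (intro ex_cong1) auto
  finally show ?thesis .
qed

definition hA :: "nat \<Rightarrow> nat" where
  "hA k = nat (\<lfloor>real (Suc k) * phi\<rfloor> + int (Suc k) - 2)"

definition hC :: "nat \<Rightarrow> nat" where
  "hC k = nat (2 * \<lfloor>real (k + 2) * phi\<rfloor> + int (k + 2) - 4)"

lemma hA_int: "int (hA k) = \<lfloor>real (Suc k) * phi\<rfloor> + int (Suc k) - 2"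
  unfolding hA_def fl_phi using fl_nonneg[of "Suc k"] by simp

lemma hC_int: "int (hC k) = 2 * \<lfloor>real (k + 2) * phi\<rfloor> + int (k + 2) - 4"
  unfolding hC_def fl_phi using fl_nonneg[of "k + 2"] by simp

lemma hA_mono: "strict_mono hA"
proof (rule strict_mono_Suc_iff[THEN iffD2], intro allI)
  fix k
  have "int (hA k) < int (hA (Suc k))" unfolding hA_int fl_phi using fl_mono[of "Suc k"] by simp
  then show "hA k < hA (Suc k)" by simp
qed

lemma hC_mono: "strict_mono hC"
proof (rule strict_mono_Suc_iff[THEN iffD2], intro allI)
  fix k
  have "int (hC k) < int (hC (Suc k))" unfolding hC_int fl_phi using fl_mono[of "k + 2"] by simp
  then show "hC k < hC (Suc k)" by simp
qed

lemma incr_range: "incr_pts = range hA"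
proof (intro set_eqI iffI)
  fix N assume "N \<in> incr_pts"
  then obtain n :: nat where n: "1 \<le> n" "int N = \<lfloor>real n * phi\<rfloor> + int n - 2"
    using incr_char by blast
  have "int (hA (n - 1)) = int N" using hA_int[of "n - 1"] n by simp
  then show "N \<in> range hA" by (metis of_nat_eq_iff rangeI)
next
  fix N assume "N \<in> range hA"
  then obtain k where "N = hA k" by blast
  then have "int N = \<lfloor>real (Suc k) * phi\<rfloor> + int (Suc k) - 2" using hA_int by simp
  then show "N \<in> incr_pts" unfolding incr_char by (intro exI[of _ "Suc k"]) simp
qed

lemma decr_range: "decr_pts = range hC"
proof (intro set_eqI iffI)
  fix N assume "N \<in> decr_pts"
  then obtain n :: nat where n: "1 \<le> n" "int N = 2 * \<lfloor>real n * phi\<rfloor> + int n - 4"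
    using decr_char by blast
  have "n \<noteq> 1"
  proof
    assume "n = 1"
    then have "\<lfloor>real n * r\<rfloor> = 0" using rp by (simp add: floor_eq_iff)
    then show False using n \<open>n = 1\<close> unfolding fl_phi by simp
  qed
  then have n2: "2 \<le> n" using n by simp
  have "int (hC (n - 2)) = int N" using hC_int[of "n - 2"] n n2 by simp
  then show "N \<in> range hC" by (metis of_nat_eq_iff rangeI)
next
  fix N assume "N \<in> range hC"
  then obtain k where "N = hC k" by blast
  then have "int N = 2 * \<lfloor>real (k + 2) * phi\<rfloor> + int (k + 2) - 4" using hC_int by simp
  then show "N \<in> decr_pts" unfolding decr_char by (intro exI[of _ "k + 2"]) simp
qed

theorem theorem2:
  shows "(\<forall>n::nat. n \<ge> 1 \<longrightarrow> int (I_Z n) = \<lfloor>real n * phi\<rfloor> + int n - 2)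
    \<and> int ` const_pts =
        {2 * \<lfloor>real n * phi\<rfloor> + int n - 2 | n::nat. n \<ge> 1}
        \<union> {3 * \<lfloor>real n * phi\<rfloor> + 2 * int n - 3 | n::nat. n \<ge> 1}
    \<and> (\<forall>n::nat. n \<ge> 1 \<longrightarrow> D_Z n = 2 * \<lfloor>real n * phi\<rfloor> + int n - 4)"
proof (intro conjI allI impI)
  fix n :: nat assume n: "n \<ge> 1"
  have "I_Z n = hA (n - 1)" unfolding I_Z_def incr_range by (rule enum_range[OF hA_mono])
  then show "int (I_Z n) = \<lfloor>real n * phi\<rfloor> + int n - 2" using hA_int[of "n - 1"] n by simp
next
  show "int ` const_pts =
        {2 * \<lfloor>real n * phi\<rfloor> + int n - 2 | n::nat. n \<ge> 1}
        \<union> {3 * \<lfloor>real n * phi\<rfloor> + 2 * int n - 3 | n::nat. n \<ge> 1}"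
  proof (intro set_eqI iffI)
    fix z assume "z \<in> int ` const_pts"
    then obtain N where N: "z = int N" "Tb1 N \<or> Tb2 N" unfolding const_eq by blast
    then show "z \<in> {2 * \<lfloor>real n * phi\<rfloor> + int n - 2 | n::nat. n \<ge> 1}
        \<union> {3 * \<lfloor>real n * phi\<rfloor> + 2 * int n - 3 | n::nat. n \<ge> 1}"
      unfolding tb1_char tb2_char by auto
  next
    fix z assume "z \<in> {2 * \<lfloor>real n * phi\<rfloor> + int n - 2 | n::nat. n \<ge> 1}
        \<union> {3 * \<lfloor>real n * phi\<rfloor> + 2 * int n - 3 | n::nat. n \<ge> 1}"
    then obtain n :: nat where n: "n \<ge> 1"
      "z = 2 * \<lfloor>real n * phi\<rfloor> + int n - 2 \<or> z = 3 * \<lfloor>real n * phi\<rfloor> + 2 * int n - 3"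
      by blast
    have q0: "0 \<le> \<lfloor>real n * r\<rfloor>" by (rule fl_nonneg)
    have n1: "1 \<le> int n" using n(1) by simp
    have "z = 2 * (int n + \<lfloor>real n * r\<rfloor>) + int n - 2 \<or> z = 3 * (int n + \<lfloor>real n * r\<rfloor>) + 2 * int n - 3"
      using n(2) unfolding fl_phi .
    then have z0: "0 \<le> z" using q0 n1 by (elim disjE; simp; linarith)
    define N where "N = nat z"
    have zN: "z = int N" using z0 unfolding N_def by simp
    have "Tb1 N \<or> Tb2 N" unfolding tb1_char tb2_char using n zN by auto
    then show "z \<in> int ` const_pts" unfolding const_eq using zN by blast
  qed
next
  fix n :: nat assume n: "n \<ge> 1"
  show "D_Z n = 2 * \<lfloor>real n * phi\<rfloor> + int n - 4"
  proof (cases "n = 1")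
    case True
    then have "\<lfloor>real n * r\<rfloor> = 0" using rp by (simp add: floor_eq_iff)
    then show ?thesis using True unfolding D_Z_def fl_phi by simp
  next
    case False
    then have n2: "n \<ge> 2" using n by simp
    have "enumerate decr_pts (n - 2) = hC (n - 2)" unfolding decr_range by (rule enum_range[OF hC_mono])
    then show ?thesis unfolding D_Z_def using False hC_int[of "n - 2"] n2 by simp
  qed
qed

end
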